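(* Consider the weighted-median opinion dynamics on a row-stochastic influence matrix $W$ with node set $V=\{1,\dots,n\}$. For every initial condition $x(0)\in\mathbb R^n$, the solution $x(t)$ almost surely reaches an equilibrium $x^*$ in finite time.
   Context: A matrix $W=(w_{ij})_{n\times n}$ is row-stochastic if $w_{ij}\ge 0$ for all $i,j$ and $\sum_{j=1}^n w_{ij}=1$ for every $i$. A weighted median of $x\in\mathbb R^n$ with respect to row $i$ of $W$ is any $y\in\{x_1,\dots,x_n\}$ satisfying $\sum_{j:\,x_j<y}w_{ij}\le 1/2$ and $\sum_{j:\,x_j>y}w_{ij}\le 1/2$. $\mathrm{Med}_i(x;W)$ denotes this weighted median when it is unique. When it is not unique, $\mathrm{Med}_i(x;W)$ denotes the weighted median closest to $x_i$, which is then uniquely determined. Weighted-median opinion dynamics: given $x(0)\in\mathbb R^n$, at each time step $t+1$ ($t=0,1,2,\dots$) an index $i$ is drawn uniformly at random from $\{1,\dots,n\}$, independently of the past. Then $x_i(t+1)=\mathrm{Med}_i(x(t);W)$ and $x_j(t+1)=x_j(t)$ for $j\ne i$. An equilibrium is a vector $x^*$ with $x^*_i=\mathrm{Med}_i(x^*;W)$ for all $i$. *)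

theory Defs
  imports "HOL-Probability.Probability"
begin

text \<open>Node set V is modelled by a finite type 'n (so n = CARD('n) \<ge> 1).
  The influence matrix is W :: real^'n^'n with entries W $ i $ j.\<close>

definition row_stochastic :: "real ^ 'n ^ 'n \<Rightarrow> bool" where
  "row_stochastic W \<longleftrightarrow>
     (\<forall>i j. W $ i $ j \<ge> 0) \<and> (\<forall>i. (\<Sum>j\<in>UNIV. W $ i $ j) = 1)"

definition is_wmedian :: "real ^ 'n ^ 'n \<Rightarrow> real ^ 'n \<Rightarrow> 'n \<Rightarrow> real \<Rightarrow> bool" where
  "is_wmedian W x i y \<longleftrightarrow>
     (\<exists>k. y = x $ k) \<and>
     (\<Sum>j\<in>{j. x $ j < y}. W $ i $ j) \<le> 1/2 \<and>
     (\<Sum>j\<in>{j. x $ j > y}. W $ i $ j) \<le> 1/2"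

definition Med :: "real ^ 'n ^ 'n \<Rightarrow> real ^ 'n \<Rightarrow> 'n \<Rightarrow> real" where
  "Med W x i =
     (if \<exists>!y. is_wmedian W x i y then THE y. is_wmedian W x i y
      else THE y. is_wmedian W x i y \<and>
                  (\<forall>z. is_wmedian W x i z \<longrightarrow> \<bar>y - x $ i\<bar> \<le> \<bar>z - x $ i\<bar>))"

definition is_equilibrium :: "real ^ 'n ^ 'n \<Rightarrow> real ^ 'n \<Rightarrow> bool" where
  "is_equilibrium W x \<longleftrightarrow> (\<forall>i. x $ i = Med W x i)"

text \<open>Trajectory driven by a stream of selected nodes: \<omega> !! t is the index drawn at
  time step t+1.\<close>
primrec wm_traj :: "real ^ 'n ^ 'n \<Rightarrow> real ^ 'n \<Rightarrow> 'n stream \<Rightarrow> nat \<Rightarrow> real ^ 'n" where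
  "wm_traj W x0 \<omega> 0 = x0"
| "wm_traj W x0 \<omega> (Suc t) =
     (let x = wm_traj W x0 \<omega> t; i = \<omega> !! t
      in (\<chi> j. if j = i then Med W x i else x $ j))"

definition node_selection :: "'n::finite stream measure" where
  "node_selection = stream_space (measure_pmf (pmf_of_set UNIV))"

end

theory Submission
  imports Defs
begin


definition Uw :: "real^'n^'n \<Rightarrow> real^'n \<Rightarrow> 'n \<Rightarrow> real \<Rightarrow> real" where
  "Uw W x i y = (\<Sum>j\<in>{j. x$j > y}. W$i$j)"
definition Lw :: "real^'n^'n \<Rightarrow> real^'n \<Rightarrow> 'n \<Rightarrow> real \<Rightarrow> real" where
  "Lw W x i y = (\<Sum>j\<in>{j. x$j < y}. W$i$j)"

lemma wmed_iff: "is_wmedian W x i y \<longleftrightarrow> y \<in> range (($) x) \<and> Lw W x i y \<le> 1/2 \<and> Uw W x i y \<le> 1/2"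
  unfolding is_wmedian_def Uw_def Lw_def by auto

lemma sum_split_pred:
  fixes f :: "'n::finite \<Rightarrow> real"
  shows "(\<Sum>j\<in>{j. P j}. f j) + (\<Sum>j\<in>{j. \<not> P j}. f j) = sum f UNIV"
proof -
  have "sum f UNIV = sum f ({j. P j} \<union> {j. \<not> P j})" by (rule arg_cong[where f="sum f"]) auto
  also have "\<dots> = (\<Sum>j\<in>{j. P j}. f j) + (\<Sum>j\<in>{j. \<not> P j}. f j)"
    by (rule sum.union_disjoint) auto
  finally show ?thesis by simp
qed

lemma sum_W_mono:
  assumes rs: "row_stochastic W" and "A \<subseteq> B"
  shows "(\<Sum>j\<in>A. W$i$j) \<le> (\<Sum>j\<in>B. W$i$j)"
  using assms by (intro sum_mono2) (auto simp: row_stochastic_def)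

lemma exists_med_below:
  assumes rs: "row_stochastic W" and U: "Uw W x i (x$k) \<le> 1/2"
  shows "\<exists>m. is_wmedian W x i m \<and> m \<le> x$k"
proof -
  define S where "S = {y \<in> range (($) x). Uw W x i y \<le> 1/2 \<and> y \<le> x$k}"
  have finS: "finite S" unfolding S_def by simp
  have neS: "x$k \<in> S" using U unfolding S_def by auto
  define y0 where "y0 = Min S"
  have y0S: "y0 \<in> S" using Min_in[OF finS] neS unfolding y0_def by auto
  have y0min: "\<And>y. y \<in> S \<Longrightarrow> y0 \<le> y" using finS unfolding y0_def by simp
  have "Lw W x i y0 \<le> 1/2"
  proof (rule ccontr)
    assume L: "\<not> Lw W x i y0 \<le> 1/2"
    define T where "T = {y \<in> range (($) x). y < y0}"
    have "{j. x$j < y0} \<noteq> {}" proof assume "{j. x$j < y0} = {}" then show False using L unfolding Lw_def by simp qed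
    then obtain j0 where "x$j0 < y0" by auto
    hence neT: "x$j0 \<in> T" unfolding T_def by auto
    have finT: "finite T" unfolding T_def by simp
    define y' where "y' = Max T"
    have y'T: "y' \<in> T" using Max_in[OF finT] neT unfolding y'_def by auto
    have y'max: "\<And>y. y \<in> T \<Longrightarrow> y \<le> y'" using finT unfolding y'_def by simp
    have seteq: "{j. x$j > y'} = {j. \<not> x$j < y0}"
    proof safe
      fix j assume "y' < x$j" "x$j < y0"
      hence "x$j \<in> T" unfolding T_def by auto
      with y'max \<open>y' < x$j\<close> show False by force
    next
      fix j assume "\<not> x$j < y0"
      thus "y' < x$j" using y'T unfolding T_def by auto
    qed
    have "Lw W x i y0 + Uw W x i y' = 1"
      unfolding Lw_def Uw_def seteq using sum_split_pred[where P="\<lambda>j. x$j < y0" and f="\<lambda>j. W$i$j"] rs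
      by (simp add: row_stochastic_def)
    hence "Uw W x i y' \<le> 1/2" using L by simp
    moreover have "y' \<le> x$k" using y'T y0S unfolding T_def S_def by auto
    ultimately have "y' \<in> S" using y'T unfolding S_def T_def by auto
    hence "y0 \<le> y'" by (rule y0min)
    thus False using y'T unfolding T_def by auto
  qed
  thus ?thesis using y0S unfolding S_def wmed_iff by auto
qed

lemma exists_med_above:
  assumes rs: "row_stochastic W" and U: "Lw W x i (x$k) \<le> 1/2"
  shows "\<exists>m. is_wmedian W x i m \<and> x$k \<le> m"
proof -
  define S where "S = {y \<in> range (($) x). Lw W x i y \<le> 1/2 \<and> x$k \<le> y}"
  have finS: "finite S" unfolding S_def by simp
  have neS: "x$k \<in> S" using U unfolding S_def by auto
  define y0 where "y0 = Max S"
  have y0S: "y0 \<in> S" using Max_in[OF finS] neS unfolding y0_def by auto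
  have y0min: "\<And>y. y \<in> S \<Longrightarrow> y \<le> y0" using finS unfolding y0_def by simp
  have "Uw W x i y0 \<le> 1/2"
  proof (rule ccontr)
    assume L: "\<not> Uw W x i y0 \<le> 1/2"
    define T where "T = {y \<in> range (($) x). y > y0}"
    have "{j. x$j > y0} \<noteq> {}" proof assume "{j. x$j > y0} = {}" then show False using L unfolding Uw_def by simp qed
    then obtain j0 where "x$j0 > y0" by auto
    hence neT: "x$j0 \<in> T" unfolding T_def by auto
    have finT: "finite T" unfolding T_def by simp
    define y' where "y' = Min T"
    have y'T: "y' \<in> T" using Min_in[OF finT] neT unfolding y'_def by auto
    have y'max: "\<And>y. y \<in> T \<Longrightarrow> y' \<le> y" using finT unfolding y'_def by simp
    have seteq: "{j. x$j < y'} = {j. \<not> x$j > y0}"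
    proof safe
      fix j assume "y' > x$j" "x$j > y0"
      hence "x$j \<in> T" unfolding T_def by auto
      with y'max \<open>y' > x$j\<close> show False by force
    next
      fix j assume "\<not> x$j > y0"
      thus "y' > x$j" using y'T unfolding T_def by auto
    qed
    have "Uw W x i y0 + Lw W x i y' = 1"
      unfolding Lw_def Uw_def seteq using sum_split_pred[where P="\<lambda>j. x$j > y0" and f="\<lambda>j. W$i$j"] rs
      by (simp add: row_stochastic_def)
    hence "Lw W x i y' \<le> 1/2" using L by simp
    moreover have "x$k \<le> y'" using y'T y0S unfolding T_def S_def by auto
    ultimately have "y' \<in> S" using y'T unfolding S_def T_def by auto
    hence "y' \<le> y0" by (rule y0min)
    thus False using y'T unfolding T_def by auto
  qed
  thus ?thesis using y0S unfolding S_def wmed_iff by auto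
qed

lemma med_exists:
  assumes rs: "row_stochastic W"
  shows "\<exists>m. is_wmedian W x i m"
proof -
  have "finite (range (($) x))" by simp
  then obtain k where k: "x$k = Max (range (($) x))"
    by (metis (mono_tags, lifting) Max_in UNIV_not_empty image_iff image_is_empty)
  have "\<And>j. x$j \<le> x$k" unfolding k by simp
  hence "{j. x$j > x$k} = {}" by (auto simp: not_less)
  hence "Uw W x i (x$k) \<le> 1/2" unfolding Uw_def by simp
  thus ?thesis using exists_med_below[OF rs] by blast
qed


definition MS :: "real^'n^'n \<Rightarrow> real^'n \<Rightarrow> 'n \<Rightarrow> real set" where
  "MS W x i = {y. is_wmedian W x i y}"
definition ma :: "real^'n^'n \<Rightarrow> real^'n \<Rightarrow> 'n \<Rightarrow> real" where
  "ma W x i = Min (MS W x i)"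
definition mb :: "real^'n^'n \<Rightarrow> real^'n \<Rightarrow> 'n \<Rightarrow> real" where
  "mb W x i = Max (MS W x i)"

lemma MS_sub: "MS W x i \<subseteq> range (($) x)"
  unfolding MS_def is_wmedian_def by auto

lemma MS_fin: "finite (MS W x i)"
  using MS_sub finite_subset by (metis finite finite_imageI)

lemma MS_ne: "row_stochastic W \<Longrightarrow> MS W x i \<noteq> {}"
  using med_exists unfolding MS_def by blast

lemma ma_in: "row_stochastic W \<Longrightarrow> ma W x i \<in> MS W x i"
  unfolding ma_def using MS_fin MS_ne Min_in by blast
lemma mb_in: "row_stochastic W \<Longrightarrow> mb W x i \<in> MS W x i"
  unfolding mb_def using MS_fin MS_ne Max_in by blast
lemma ma_le: "y \<in> MS W x i \<Longrightarrow> ma W x i \<le> y"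
  unfolding ma_def using Min_le[OF MS_fin] by blast
lemma mb_ge: "y \<in> MS W x i \<Longrightarrow> y \<le> mb W x i"
  unfolding mb_def using Max_ge[OF MS_fin] by blast

lemma MS_convex:
  assumes rs: "row_stochastic W" and y: "y \<in> range (($) x)" "ma W x i \<le> y" "y \<le> mb W x i"
  shows "y \<in> MS W x i"
proof -
  have "Uw W x i y \<le> Uw W x i (ma W x i)" unfolding Uw_def
    by (rule sum_W_mono[OF rs]) (use y in auto)
  moreover have "Uw W x i (ma W x i) \<le> 1/2" using ma_in[OF rs] unfolding MS_def wmed_iff by auto
  moreover have "Lw W x i y \<le> Lw W x i (mb W x i)" unfolding Lw_def
    by (rule sum_W_mono[OF rs]) (use y in auto)
  moreover have "Lw W x i (mb W x i) \<le> 1/2" using mb_in[OF rs] unfolding MS_def wmed_iff by auto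
  ultimately show ?thesis using y unfolding MS_def wmed_iff by auto
qed

lemma Med_clamp:
  assumes rs: "row_stochastic W"
  shows "Med W x i = max (ma W x i) (min (mb W x i) (x$i))"
proof -
  define a where "a = ma W x i"
  define b where "b = mb W x i"
  define c where "c = max a (min b (x$i))"
  have aM: "a \<in> MS W x i" and bM: "b \<in> MS W x i" unfolding a_def b_def using ma_in mb_in rs by auto
  have ab: "a \<le> b" using ma_le[OF bM] a_def by simp
  have bnds: "\<And>z. z \<in> MS W x i \<Longrightarrow> a \<le> z \<and> z \<le> b" using ma_le mb_ge a_def b_def by auto
  have cM: "c \<in> MS W x i"
  proof (cases "x$i < a")
    case True thus ?thesis using aM ab unfolding c_def by simp
  next
    case False
    show ?thesis
    proof (cases "x$i > b")
      case True thus ?thesis using bM ab unfolding c_def by simp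
    next
      case False2: False
      have "c = x$i" using False False2 unfolding c_def by simp
      thus ?thesis using MS_convex[OF rs, of "x$i" x i] False False2 a_def b_def by auto
    qed
  qed
  have cmin: "\<And>z. z \<in> MS W x i \<Longrightarrow> \<bar>c - x$i\<bar> \<le> \<bar>z - x$i\<bar>"
  proof -
    fix z assume "z \<in> MS W x i"
    hence "a \<le> z" "z \<le> b" using bnds by auto
    thus "\<bar>c - x$i\<bar> \<le> \<bar>z - x$i\<bar>" unfolding c_def using ab by (auto simp: abs_if max_def min_def)
  qed
  have cuniq: "\<And>z. z \<in> MS W x i \<Longrightarrow> (\<forall>w. w \<in> MS W x i \<longrightarrow> \<bar>z - x$i\<bar> \<le> \<bar>w - x$i\<bar>) \<Longrightarrow> z = c"
  proof -
    fix z assume z: "z \<in> MS W x i" "\<forall>w. w \<in> MS W x i \<longrightarrow> \<bar>z - x$i\<bar> \<le> \<bar>w - x$i\<bar>"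
    hence "a \<le> z" "z \<le> b" "\<bar>z - x$i\<bar> \<le> \<bar>c - x$i\<bar>" using bnds cM by auto
    thus "z = c" unfolding c_def using ab by (cases "x$i < a"; cases "b < x$i") (auto simp: abs_if max_def min_def split: if_splits)
  qed
  show ?thesis
  proof (cases "\<exists>!y. is_wmedian W x i y")
    case True
    hence "(THE y. is_wmedian W x i y) = c" using cM unfolding MS_def by (metis mem_Collect_eq the_equality)
    thus ?thesis using True unfolding Med_def c_def a_def b_def by simp
  next
    case False
    have "(THE y. is_wmedian W x i y \<and> (\<forall>z. is_wmedian W x i z \<longrightarrow> \<bar>y - x $ i\<bar> \<le> \<bar>z - x $ i\<bar>)) = c"
    proof (rule the_equality)
      show "is_wmedian W x i c \<and> (\<forall>z. is_wmedian W x i z \<longrightarrow> \<bar>c - x $ i\<bar> \<le> \<bar>z - x $ i\<bar>)"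
        using cM cmin unfolding MS_def by blast
      fix y assume "is_wmedian W x i y \<and> (\<forall>z. is_wmedian W x i z \<longrightarrow> \<bar>y - x $ i\<bar> \<le> \<bar>z - x $ i\<bar>)"
      thus "y = c" using cuniq unfolding MS_def by blast
    qed
    thus ?thesis using False unfolding Med_def c_def a_def b_def by simp
  qed
qed

lemma Med_in_MS: "row_stochastic W \<Longrightarrow> Med W x i \<in> MS W x i"
proof -
  assume rs: "row_stochastic W"
  define a where "a = ma W x i"
  define b where "b = mb W x i"
  have aM: "a \<in> MS W x i" and bM: "b \<in> MS W x i" unfolding a_def b_def using ma_in mb_in rs by auto
  have ab: "a \<le> b" using ma_le[OF bM] a_def by simp
  show ?thesis unfolding Med_clamp[OF rs] a_def[symmetric] b_def[symmetric]
  proof (cases "x$i < a")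
    case True thus "max a (min b (x $ i)) \<in> MS W x i" using aM ab by simp
  next
    case False
    show "max a (min b (x $ i)) \<in> MS W x i"
    proof (cases "x$i > b")
      case True thus ?thesis using bM ab by simp
    next
      case False2: False
      thus ?thesis using MS_convex[OF rs, of "x$i" x i] False False2 a_def b_def by auto
    qed
  qed
qed

lemma Med_range: "row_stochastic W \<Longrightarrow> Med W x i \<in> range (($) x)"
  using Med_in_MS MS_sub by blast

lemma Med_self: "row_stochastic W \<Longrightarrow> x$i \<in> MS W x i \<Longrightarrow> Med W x i = x$i"
  using Med_clamp ma_le mb_ge by (metis max.absorb2 min.absorb2)

lemma ma_mono:
  assumes rs: "row_stochastic W" and le: "\<And>j. x$j \<le> x'$j"
  shows "ma W x i \<le> ma W x' i"
proof -
  obtain k where k: "ma W x' i = x'$k" using ma_in[OF rs] MS_sub by blast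
  have Uk: "Uw W x' i (x'$k) \<le> 1/2" using ma_in[OF rs, of x' i] k unfolding MS_def wmed_iff by auto
  define C where "C = {y \<in> range (($) x). y \<le> x'$k}"
  have finC: "finite C" unfolding C_def by simp
  have neC: "x$k \<in> C" unfolding C_def using le by auto
  define c where "c = Max C"
  have cC: "c \<in> C" using Max_in[OF finC] neC unfolding c_def by auto
  have cmax: "\<And>y. y \<in> C \<Longrightarrow> y \<le> c" using finC unfolding c_def by simp
  obtain m where m: "c = x$m" using cC unfolding C_def by auto
  have "{j. x$j > c} \<subseteq> {j. x'$j > x'$k}"
  proof safe
    fix j assume "x$j > c"
    hence "x$j \<notin> C" using cmax by force
    hence "x$j > x'$k" unfolding C_def by auto
    thus "x'$j > x'$k" using le[of j] by simp
  qed
  hence "Uw W x i c \<le> Uw W x' i (x'$k)" unfolding Uw_def by (rule sum_W_mono[OF rs])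
  hence "Uw W x i (x$m) \<le> 1/2" using Uk m by simp
  then obtain m0 where "is_wmedian W x i m0" "m0 \<le> x$m" using exists_med_below[OF rs] by blast
  hence "ma W x i \<le> m0" using ma_le unfolding MS_def by auto
  thus ?thesis using \<open>m0 \<le> x$m\<close> m cC k unfolding C_def by auto
qed

lemma mb_mono:
  assumes rs: "row_stochastic W" and le: "\<And>j. x$j \<le> x'$j"
  shows "mb W x i \<le> mb W x' i"
proof -
  obtain k where k: "mb W x i = x$k" using mb_in[OF rs] MS_sub by blast
  have Uk: "Lw W x i (x$k) \<le> 1/2" using mb_in[OF rs, of x i] k unfolding MS_def wmed_iff by auto
  define C where "C = {y \<in> range (($) x'). x$k \<le> y}"
  have finC: "finite C" unfolding C_def by simp
  have neC: "x'$k \<in> C" unfolding C_def using le by auto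
  define c where "c = Min C"
  have cC: "c \<in> C" using Min_in[OF finC] neC unfolding c_def by auto
  have cmax: "\<And>y. y \<in> C \<Longrightarrow> c \<le> y" using finC unfolding c_def by simp
  obtain m where m: "c = x'$m" using cC unfolding C_def by auto
  have "{j. x'$j < c} \<subseteq> {j. x$j < x$k}"
  proof safe
    fix j assume "x'$j < c"
    hence "x'$j \<notin> C" using cmax by force
    hence "x'$j < x$k" unfolding C_def by auto
    thus "x$j < x$k" using le[of j] by simp
  qed
  hence "Lw W x' i c \<le> Lw W x i (x$k)" unfolding Lw_def by (rule sum_W_mono[OF rs])
  hence "Lw W x' i (x'$m) \<le> 1/2" using Uk m by simp
  then obtain m0 where "is_wmedian W x' i m0" "x'$m \<le> m0" using exists_med_above[OF rs] by blast
  hence "m0 \<le> mb W x' i" using mb_ge unfolding MS_def by auto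
  thus ?thesis using \<open>x'$m \<le> m0\<close> m cC k unfolding C_def by auto
qed

lemma Med_mono:
  assumes rs: "row_stochastic W" and le: "\<And>j. x$j \<le> x'$j"
  shows "Med W x i \<le> Med W x' i"
  unfolding Med_clamp[OF rs] using ma_mono[OF rs le] mb_mono[OF rs le] le[of i]
  by (intro max.mono min.mono)



definition stp :: "real^'n^'n \<Rightarrow> real^'n \<Rightarrow> 'n \<Rightarrow> real^'n" where
  "stp W x i = (\<chi> j. if j = i then Med W x i else x$j)"

fun run :: "real^'n^'n \<Rightarrow> real^'n \<Rightarrow> 'n list \<Rightarrow> real^'n" where
  "run W x [] = x"
| "run W x (i#is) = run W (stp W x i) is"

lemma run_append: "run W x (xs @ ys) = run W (run W x xs) ys"
  by (induction xs arbitrary: x) auto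

lemma stp_eq: "is_equilibrium W x \<Longrightarrow> stp W x i = x"
  unfolding is_equilibrium_def stp_def by (simp add: vec_eq_iff)

lemma run_eq: "is_equilibrium W x \<Longrightarrow> run W x w = x"
  by (induction w) (auto simp: stp_eq)

lemma stp_vals: "row_stochastic W \<Longrightarrow> range (($) x) \<subseteq> V \<Longrightarrow> range (($) (stp W x i)) \<subseteq> V"
  using Med_range[of W x i] unfolding stp_def by auto

lemma run_vals: "row_stochastic W \<Longrightarrow> range (($) x) \<subseteq> V \<Longrightarrow> range (($) (run W x w)) \<subseteq> V"
  by (induction w arbitrary: x) (auto simp: stp_vals)

lemma stp_self:
  assumes rs: "row_stochastic W"
  shows "Med W (stp W x i) i = Med W x i"
proof -
  define m where "m = Med W x i"
  define x' where "x' = stp W x i"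
  have mM: "is_wmedian W x i m" using Med_in_MS[OF rs] unfolding m_def MS_def by auto
  have xi: "x'$i = m" unfolding x'_def stp_def m_def by simp
  have "Lw W x' i m \<le> Lw W x i m" unfolding Lw_def
    by (rule sum_W_mono[OF rs]) (auto simp: x'_def stp_def m_def split: if_splits)
  moreover have "Uw W x' i m \<le> Uw W x i m" unfolding Uw_def
    by (rule sum_W_mono[OF rs]) (auto simp: x'_def stp_def m_def split: if_splits)
  ultimately have "x'$i \<in> MS W x' i" using mM xi unfolding MS_def wmed_iff by auto
  hence "Med W x' i = x'$i" by (rule Med_self[OF rs])
  thus ?thesis using xi unfolding x'_def m_def by simp
qed

definition phi1 :: "real set \<Rightarrow> real^'n \<Rightarrow> nat" where
  "phi1 V x = (\<Sum>j\<in>UNIV. card {v\<in>V. x$j < v})"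
definition phi2 :: "real set \<Rightarrow> real^'n \<Rightarrow> nat" where
  "phi2 V x = (\<Sum>j\<in>UNIV. card {v\<in>V. v < x$j})"

lemma phase1:
  assumes rs: "row_stochastic W" and fV: "finite V"
  shows "range (($) x) \<subseteq> V \<Longrightarrow> \<exists>w. \<forall>i. Med W (run W x w) i \<le> (run W x w)$i"
proof (induction "phi1 V x" arbitrary: x rule: less_induct)
  case less
  show ?case
  proof (cases "\<forall>i. Med W x i \<le> x$i")
    case True
    thus ?thesis by (intro exI[of _ "[]"]) simp
  next
    case False
    then obtain i where i: "x$i < Med W x i" by (auto simp: not_le)
    define x' where "x' = stp W x i"
    have x'V: "range (($) x') \<subseteq> V" unfolding x'_def using stp_vals[OF rs less.prems] .
    have ge: "\<And>j. x$j \<le> x'$j" unfolding x'_def stp_def using i by auto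
    have "phi1 V x' < phi1 V x" unfolding phi1_def
    proof (rule sum_strict_mono_ex1)
      show "finite (UNIV :: 'a set)" by simp
      show "\<forall>j\<in>UNIV. card {v \<in> V. x' $ j < v} \<le> card {v \<in> V. x $ j < v}"
        using ge fV by (auto intro!: card_mono dest: order.strict_trans1[rotated])
      have "{v \<in> V. x' $ i < v} \<subset> {v \<in> V. x $ i < v}"
      proof
        show "{v \<in> V. x' $ i < v} \<subseteq> {v \<in> V. x $ i < v}" using ge[of i] by auto
        have "x'$i \<in> V" using x'V by auto
        moreover have "x'$i = Med W x i" unfolding x'_def stp_def by simp
        ultimately show "{v \<in> V. x' $ i < v} \<noteq> {v \<in> V. x $ i < v}" using i by auto
      qed
      thus "\<exists>j\<in>UNIV. card {v \<in> V. x' $ j < v} < card {v \<in> V. x $ j < v}"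
        using fV by (auto intro!: psubset_card_mono)
    qed
    then obtain w where "\<forall>i. Med W (run W x' w) i \<le> (run W x' w)$i" using less.hyps x'V by blast
    thus ?thesis unfolding x'_def by (intro exI[of _ "i#w"]) simp
  qed
qed

lemma phase2:
  assumes rs: "row_stochastic W" and fV: "finite V"
  shows "range (($) x) \<subseteq> V \<Longrightarrow> (\<forall>i. Med W x i \<le> x$i) \<Longrightarrow> \<exists>w. is_equilibrium W (run W x w)"
proof (induction "phi2 V x" arbitrary: x rule: less_induct)
  case less
  show ?case
  proof (cases "\<forall>i. Med W x i = x$i")
    case True
    thus ?thesis unfolding is_equilibrium_def by (intro exI[of _ "[]"]) simp
  next
    case False
    then obtain i where i: "Med W x i < x$i" using less.prems(2) by (metis order.not_eq_order_implies_strict)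
    define x' where "x' = stp W x i"
    have x'V: "range (($) x') \<subseteq> V" unfolding x'_def using stp_vals[OF rs less.prems(1)] .
    have ge: "\<And>j. x'$j \<le> x$j" unfolding x'_def stp_def using i by auto
    have inv: "\<forall>j. Med W x' j \<le> x'$j"
    proof
      fix j show "Med W x' j \<le> x'$j"
      proof (cases "j = i")
        case True
        thus ?thesis using stp_self[OF rs, of x i] unfolding x'_def stp_def by simp
      next
        case False
        have "Med W x' j \<le> Med W x j" by (rule Med_mono[OF rs ge])
        also have "\<dots> \<le> x$j" using less.prems(2) by blast
        also have "\<dots> = x'$j" using False unfolding x'_def stp_def by simp
        finally show ?thesis .
      qed
    qed
    have "phi2 V x' < phi2 V x" unfolding phi2_def
    proof (rule sum_strict_mono_ex1)
      show "finite (UNIV :: 'a set)" by simp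
      show "\<forall>j\<in>UNIV. card {v \<in> V. v < x' $ j} \<le> card {v \<in> V. v < x $ j}"
        using ge fV by (auto intro!: card_mono dest: order.strict_trans2)
      have "{v \<in> V. v < x' $ i} \<subset> {v \<in> V. v < x $ i}"
      proof
        show "{v \<in> V. v < x' $ i} \<subseteq> {v \<in> V. v < x $ i}" using ge[of i] by auto
        have "x'$i \<in> V" using x'V by auto
        moreover have "x'$i = Med W x i" unfolding x'_def stp_def by simp
        ultimately show "{v \<in> V. v < x' $ i} \<noteq> {v \<in> V. v < x $ i}" using i by auto
      qed
      thus "\<exists>j\<in>UNIV. card {v \<in> V. v < x' $ j} < card {v \<in> V. v < x $ j}"
        using fV by (auto intro!: psubset_card_mono)
    qed
    then obtain w where "is_equilibrium W (run W x' w)" using less.hyps x'V inv by blast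
    thus ?thesis unfolding x'_def by (intro exI[of _ "i#w"]) simp
  qed
qed

lemma reach_eq:
  assumes rs: "row_stochastic W" and fV: "finite V" and xV: "range (($) x) \<subseteq> V"
  shows "\<exists>w. is_equilibrium W (run W x w)"
proof -
  obtain w1 where w1: "\<forall>i. Med W (run W x w1) i \<le> (run W x w1)$i" using phase1[OF rs fV xV] by blast
  obtain w2 where "is_equilibrium W (run W (run W x w1) w2)"
    using phase2[OF rs fV run_vals[OF rs xV] w1] by blast
  thus ?thesis by (metis run_append)
qed

lemma universal_word:
  assumes rs: "row_stochastic W" and fV: "finite V"
  shows "finite S \<Longrightarrow> S \<subseteq> {x. range (($) x) \<subseteq> V} \<Longrightarrow> \<exists>u. \<forall>s\<in>S. is_equilibrium W (run W s u)"
proof (induction S rule: finite_induct)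
  case empty thus ?case by simp
next
  case (insert s S)
  then obtain u where u: "\<forall>s\<in>S. is_equilibrium W (run W s u)" by auto
  have sV: "range (($) (run W s u)) \<subseteq> V" using run_vals[OF rs] insert.prems by auto
  obtain w where w: "is_equilibrium W (run W (run W s u) w)" using reach_eq[OF rs fV sV] by blast
  show ?case
  proof (intro exI[of _ "u @ w"] ballI)
    fix t assume "t \<in> insert s S"
    thus "is_equilibrium W (run W t (u @ w))"
      using u w by (auto simp: run_append run_eq)
  qed
qed

lemma finite_states:
  assumes fV: "finite V"
  shows "finite {x::real^'n. range (($) x) \<subseteq> V}"
proof -
  have "{x::real^'n. range (($) x) \<subseteq> V} \<subseteq> vec_lambda ` (UNIV \<rightarrow>\<^sub>E V)"
  proof
    fix x :: "real^'n" assume "x \<in> {x. range (($) x) \<subseteq> V}"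
    hence "(\<lambda>j. x$j) \<in> UNIV \<rightarrow>\<^sub>E V" by auto
    moreover have "x = vec_lambda (\<lambda>j. x$j)" by simp
    ultimately show "x \<in> vec_lambda ` (UNIV \<rightarrow>\<^sub>E V)" by blast
  qed
  moreover have "finite (vec_lambda ` (UNIV \<rightarrow>\<^sub>E V) :: (real^'n) set)"
    using fV by (intro finite_imageI finite_PiE) auto
  ultimately show ?thesis by (rule finite_subset)
qed

lemma traj_Suc: "wm_traj W x0 \<omega> (Suc t) = stp W (wm_traj W x0 \<omega> t) (\<omega> !! t)"
  by (simp add: stp_def Let_def)

lemma traj_add: "wm_traj W x0 \<omega> (t + k) = run W (wm_traj W x0 \<omega> t) (stake k (sdrop t \<omega>))"
proof (induction k)
  case 0 thus ?case by simp
next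
  case (Suc k)
  have "wm_traj W x0 \<omega> (t + Suc k) = stp W (wm_traj W x0 \<omega> (t + k)) (\<omega> !! (t + k))"
    by (simp add: traj_Suc[symmetric])
  also have "\<dots> = run W (wm_traj W x0 \<omega> t) (stake k (sdrop t \<omega>) @ [sdrop t \<omega> !! k])"
    using Suc by (simp add: run_append sdrop_snth)
  also have "\<dots> = run W (wm_traj W x0 \<omega> t) (stake (Suc k) (sdrop t \<omega>))"
    by (simp only: stake_Suc)
  finally show ?case .
qed

lemma traj_vals:
  assumes rs: "row_stochastic W"
  shows "range (($) (wm_traj W x0 \<omega> t)) \<subseteq> range (($) x0)"
proof (induction t)
  case 0 thus ?case by simp
next
  case (Suc t) thus ?case unfolding traj_Suc by (rule stp_vals[OF rs])
qed



abbreviation "unifM \<equiv> measure_pmf (pmf_of_set (UNIV :: 'n::finite set))"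

lemma node_selection_eq: "node_selection = stream_space unifM"
  unfolding node_selection_def ..

lemma meas_stake: "Measurable.pred (stream_space unifM) (\<lambda>\<omega>::'n::finite stream. stake n \<omega> = u)"
  by measurable

lemma meas_ev: "Measurable.pred (stream_space unifM) (ev (\<lambda>\<omega>::'n::finite stream. stake n \<omega> = u))"
  by measurable

lemma unif_single: "(\<integral>\<^sup>+x. indicator {a} x \<partial>(unifM :: 'n::finite measure)) = ennreal (1 / real CARD('n))"
  by (simp add: emeasure_pmf_single)

lemma integral_sdrop:
  fixes g :: "'n::finite stream \<Rightarrow> ennreal"
  assumes g[measurable]: "g \<in> borel_measurable (stream_space unifM)"
  shows "(\<integral>\<^sup>+\<omega>. g (sdrop n \<omega>) \<partial>stream_space unifM) = (\<integral>\<^sup>+\<omega>. g \<omega> \<partial>stream_space unifM)"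
proof (induction n)
  case 0 thus ?case by simp
next
  case (Suc n)
  have "(\<integral>\<^sup>+\<omega>. g (sdrop (Suc n) \<omega>) \<partial>stream_space unifM)
      = (\<integral>\<^sup>+x. (\<integral>\<^sup>+\<omega>. g (sdrop (Suc n) (x ## \<omega>)) \<partial>stream_space unifM) \<partial>unifM)"
    by (rule prob_space.nn_integral_stream_space[OF prob_space_measure_pmf]) measurable
  also have "\<dots> = (\<integral>\<^sup>+x. (\<integral>\<^sup>+\<omega>. g \<omega> \<partial>stream_space unifM) \<partial>(unifM :: 'n measure))"
    using Suc by simp
  also have "\<dots> = (\<integral>\<^sup>+\<omega>. g \<omega> \<partial>stream_space unifM)"
    by (simp add: measure_pmf.emeasure_space_1)
  finally show ?case .
qed

lemma integral_word:
  fixes g :: "'n::finite stream \<Rightarrow> ennreal"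
  assumes g[measurable]: "g \<in> borel_measurable (stream_space unifM)"
  shows "(\<integral>\<^sup>+\<omega>. indicator {\<omega>. stake (length u) \<omega> = u} \<omega> * g (sdrop (length u) \<omega>) \<partial>stream_space unifM)
         = ennreal (1 / real CARD('n)) ^ length u * (\<integral>\<^sup>+\<omega>. g \<omega> \<partial>stream_space unifM)"
proof (induction u)
  case Nil thus ?case by simp
next
  case (Cons a u)
  have "(\<integral>\<^sup>+\<omega>. indicator {\<omega>. stake (length (a#u)) \<omega> = a#u} \<omega> * g (sdrop (length (a#u)) \<omega>) \<partial>stream_space unifM)
      = (\<integral>\<^sup>+x. (\<integral>\<^sup>+\<omega>. indicator {\<omega>. stake (length (a#u)) \<omega> = a#u} (x ## \<omega>) * g (sdrop (length (a#u)) (x ## \<omega>)) \<partial>stream_space unifM) \<partial>unifM)"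
    by (rule prob_space.nn_integral_stream_space[OF prob_space_measure_pmf]) measurable
  also have "\<dots> = (\<integral>\<^sup>+x. indicator {a} x * (\<integral>\<^sup>+\<omega>. indicator {\<omega>. stake (length u) \<omega> = u} \<omega> * g (sdrop (length u) \<omega>) \<partial>stream_space unifM) \<partial>unifM)"
    by (intro nn_integral_cong) (auto simp: indicator_def)
  also have "\<dots> = (\<integral>\<^sup>+x. indicator {a} x \<partial>unifM) * (\<integral>\<^sup>+\<omega>. indicator {\<omega>. stake (length u) \<omega> = u} \<omega> * g (sdrop (length u) \<omega>) \<partial>stream_space unifM)"
    by (rule nn_integral_multc) measurable
  also have "\<dots> = ennreal (1 / real CARD('n)) ^ length (a#u) * (\<integral>\<^sup>+\<omega>. g \<omega> \<partial>stream_space unifM)"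
    using Cons by (simp add: unif_single mult.assoc)
  finally show ?case .
qed

lemma word_occurs:
  fixes u :: "'n::finite list"
  shows "AE \<omega> in stream_space unifM. ev (\<lambda>s. stake (length u) s = u) \<omega>"
proof -
  define L where "L = length u"
  define B where "B = {\<omega> \<in> space (stream_space (unifM :: 'n measure)). \<not> ev (\<lambda>s. stake L s = u) \<omega>}"
  have B[measurable]: "B \<in> sets (stream_space unifM)" unfolding B_def by measurable
  define p where "p = emeasure (stream_space unifM) B"
  have pfin: "p \<noteq> \<infinity>" unfolding p_def
  proof -
    have "emeasure (stream_space unifM) B \<le> 1"
      by (rule prob_space.emeasure_le_1[OF prob_space.prob_space_stream_space[OF prob_space_measure_pmf]])
    thus "emeasure (stream_space unifM) B \<noteq> \<infinity>"
      by (metis ennreal_one_neq_top neq_top_trans infinity_ennreal_def)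
  qed
  have pt: "\<And>\<omega>. indicator B \<omega> + indicator {\<omega>. stake L \<omega> = u} \<omega> * indicator B (sdrop L \<omega>)
            \<le> (indicator B (sdrop L \<omega>) :: ennreal)"
  proof -
    fix \<omega> :: "'n stream"
    have sp: "space (stream_space (unifM :: 'n measure)) = UNIV" by (simp add: space_stream_space)
    show "indicator B \<omega> + indicator {\<omega>. stake L \<omega> = u} \<omega> * indicator B (sdrop L \<omega>)
            \<le> (indicator B (sdrop L \<omega>) :: ennreal)"
    proof (cases "\<omega> \<in> B")
      case True
      hence "\<not> ev (\<lambda>s. stake L s = u) \<omega>" unfolding B_def by auto
      have s1: "stake L \<omega> \<noteq> u"
      proof
        assume "stake L \<omega> = u"
        hence "ev (\<lambda>s. stake L s = u) \<omega>" by blast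
        thus False using \<open>\<not> ev (\<lambda>s. stake L s = u) \<omega>\<close> by blast
      qed
      have "\<not> ev (\<lambda>s. stake L s = u) (sdrop L \<omega>)"
      proof
        assume "ev (\<lambda>s. stake L s = u) (sdrop L \<omega>)"
        then obtain m where "stake L (sdrop m (sdrop L \<omega>)) = u" unfolding ev_iff_sdrop by blast
        hence "stake L (sdrop (L + m) \<omega>) = u" by simp
        hence "ev (\<lambda>s. stake L s = u) \<omega>" unfolding ev_iff_sdrop by blast
        thus False using \<open>\<not> ev (\<lambda>s. stake L s = u) \<omega>\<close> by blast
      qed
      note s1 this
      hence "sdrop L \<omega> \<in> B" unfolding B_def sp by auto
      thus ?thesis using True \<open>stake L \<omega> \<noteq> u\<close> by simp
    next
      case False thus ?thesis by (simp add: indicator_def)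
    qed
  qed
  have "p + ennreal (1 / real CARD('n)) ^ L * p
      = (\<integral>\<^sup>+\<omega>. indicator B \<omega> \<partial>stream_space unifM) + (\<integral>\<^sup>+\<omega>. indicator {\<omega>. stake L \<omega> = u} \<omega> * indicator B (sdrop L \<omega>) \<partial>stream_space unifM)"
  proof -
    have "(\<integral>\<^sup>+\<omega>. indicator {\<omega>. stake L \<omega> = u} \<omega> * indicator B (sdrop L \<omega>) \<partial>stream_space unifM)
        = ennreal (1 / real CARD('n)) ^ L * (\<integral>\<^sup>+\<omega>. indicator B \<omega> \<partial>stream_space unifM)"
      unfolding L_def by (rule integral_word) measurable
    thus ?thesis unfolding p_def by (simp add: nn_integral_indicator[OF B])
  qed
  also have "\<dots> = (\<integral>\<^sup>+\<omega>. indicator B \<omega> + indicator {\<omega>. stake L \<omega> = u} \<omega> * indicator B (sdrop L \<omega>) \<partial>stream_space unifM)"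
    by (rule nn_integral_add[symmetric]) measurable
  also have "\<dots> \<le> (\<integral>\<^sup>+\<omega>. indicator B (sdrop L \<omega>) \<partial>stream_space unifM)"
    by (rule nn_integral_mono) (rule pt)
  also have "\<dots> = p" unfolding p_def by (simp add: integral_sdrop)
  finally have "p + ennreal (1 / real CARD('n)) ^ L * p \<le> p + 0" by simp
  hence "ennreal (1 / real CARD('n)) ^ L * p \<le> 0" using pfin by (simp add: ennreal_add_left_cancel_le)
  moreover have "ennreal (1 / real CARD('n)) ^ L \<noteq> 0" by simp
  ultimately have "p = 0" by simp
  show ?thesis
    by (rule AE_I[of _ _ B]) (use \<open>p = 0\<close> in \<open>auto simp: B_def p_def L_def\<close>)
qed



theorem mainTheorem7:
  fixes W :: "real ^ 'n ^ 'n" and x0 :: "real ^ 'n"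
  assumes "row_stochastic W"
  shows "AE \<omega> in node_selection.
           \<exists>T xstar. is_equilibrium W xstar \<and> (\<forall>t\<ge>T. wm_traj W x0 \<omega> t = xstar)"
proof -
  note rs = assms
  define V where "V = range (($) x0)"
  have fV: "finite V" unfolding V_def by simp
  obtain u where u: "\<forall>s\<in>{x::real^'n. range (($) x) \<subseteq> V}. is_equilibrium W (run W s u)"
    using universal_word[OF rs fV finite_states[OF fV]] by blast
  define L where "L = length u"
  have ae: "AE \<omega> in node_selection. ev (\<lambda>s. stake L s = u) \<omega>"
    unfolding node_selection_eq L_def by (rule word_occurs)
  show ?thesis using ae
  proof (rule AE_mp, intro AE_I2 impI)
    fix \<omega> :: "'n stream"
    assume "ev (\<lambda>s. stake L s = u) \<omega>"
    then obtain t where t: "stake L (sdrop t \<omega>) = u" unfolding ev_iff_sdrop by blast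
    define xt where "xt = wm_traj W x0 \<omega> t"
    have "range (($) xt) \<subseteq> V" unfolding xt_def V_def by (rule traj_vals[OF rs])
    hence eq: "is_equilibrium W (run W xt u)" using u by blast
    have T: "wm_traj W x0 \<omega> (t + L) = run W xt u"
      using traj_add[of W x0 \<omega> t L] t unfolding xt_def by simp
    show "\<exists>T xstar. is_equilibrium W xstar \<and> (\<forall>t\<ge>T. wm_traj W x0 \<omega> t = xstar)"
    proof (intro exI conjI allI impI)
      show "is_equilibrium W (run W xt u)" by (rule eq)
      fix t' assume "t + L \<le> t'"
      then obtain k where k: "t' = (t + L) + k" by (metis le_add_diff_inverse)
      show "wm_traj W x0 \<omega> t' = run W xt u"
        unfolding k traj_add[of W x0 \<omega> "t + L" k] T using run_eq[OF eq] by simp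
    qed
  qed
qed


end
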